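(* Let $m>n$ be coprime positive integers, $k\in\mathbb Z$, $\alpha=\epsilon_i-\delta_j$ and $\beta=\nu^{-k}(\alpha)$. If $\lambda\in X_{\pm\alpha}$, then $x(\lambda,k)\in\Pi_{\pm\beta}$ and $x(t_{\pm\alpha}(\lambda),k)=\tau_{\pm\beta}(x(\lambda,k))$.
   Context: $X$ is the set of partitions $\lambda=(\lambda_1\ge\dots\ge\lambda_n\ge0)$ with $\lambda_1\le m$, drawn in an $n\times m$ rectangle with rows $\epsilon_1,\dots,\epsilon_n$ top to bottom and columns $\delta_1,\dots,\delta_m$; the diagram consists of boxes $\epsilon_p-\delta_q$ with $q\le\lambda_{n+1-p}$; $\lambda'_q=\#\{p:\lambda_p\ge q\}$. $X_\alpha$ (resp. $X_{-\alpha}$): diagrams for which box $\alpha$ is an outer (resp. inner) corner; $t_\alpha$ adds and $t_{-\alpha}$ removes it. Elements of $\mathbb Z^{n|m}$ are $(a_1,\dots,a_n|b_1,\dots,b_m)=\sum a_p\epsilon_p-\sum b_q\delta_q$. $x(\lambda)$ has $a_p=m(n-p)+n\lambda_{n+1-p}$, $b_q=n(q-1)+m\lambda'_q$, and $x(\lambda,k)=\nu^{-k}x(\lambda)+k\mathbf m$ with $\mathbf m=(m,\dots,m|m,\dots,m)$, where $\nu$ is linear with $\nu\epsilon_p=\epsilon_{p+1}$ (indices mod $n$ in $\{1,\dots,n\}$), $\nu\delta_q=\delta_q$. For $\gamma=\epsilon_p-\delta_q$: $\Pi_\gamma=\{a_p=b_q\}$, $\Pi_{-\gamma}=\{a_p-b_q=n-m\}$,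 $\tau_\gamma$ adds $n$ to $a_p$ and $m$ to $b_q$, $\tau_{-\gamma}=\tau_\gamma^{-1}$. *)

theory Defs
  imports Main
begin

text \<open>Partitions lambda = (lambda_1 >= ... >= lambda_n >= 0) with lambda_1 <= m,
  represented as functions nat => nat, with lambda p meaningful for p in {1..n}
  and lambda p = 0 outside {1..n} (canonical representation).\<close>

definition partsX :: "nat \<Rightarrow> nat \<Rightarrow> (nat \<Rightarrow> nat) set" where
  "partsX n m = {lam. (\<forall>p. (p < 1 \<or> p > n) \<longrightarrow> lam p = 0)
                  \<and> (\<forall>p q. 1 \<le> p \<longrightarrow> p \<le> q \<longrightarrow> q \<le> n \<longrightarrow> lam q \<le> lam p)
                  \<and> (\<forall>p. lam p \<le> m)}"

text \<open>Diagram: the set of boxes eps_p - delta_q, encoded as pairs (p,q),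
  with 1 <= p <= n, 1 <= q <= lambda_(n+1-p).\<close>

definition diagram :: "nat \<Rightarrow> (nat \<Rightarrow> nat) \<Rightarrow> (nat \<times> nat) set" where
  "diagram n lam = {(p, q). 1 \<le> p \<and> p \<le> n \<and> 1 \<le> q \<and> q \<le> lam (n + 1 - p)}"

definition conj_part :: "nat \<Rightarrow> (nat \<Rightarrow> nat) \<Rightarrow> nat \<Rightarrow> nat" where
  "conj_part n lam q = card {p \<in> {1..n}. q \<le> lam p}"

definition Xplus :: "nat \<Rightarrow> nat \<Rightarrow> nat \<times> nat \<Rightarrow> (nat \<Rightarrow> nat) set" where
  "Xplus n m \<alpha> = {lam \<in> partsX n m. \<alpha> \<notin> diagram n lam \<and>
       (\<exists>mu \<in> partsX n m. diagram n mu = diagram n lam \<union> {\<alpha>})}"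

definition Xminus :: "nat \<Rightarrow> nat \<Rightarrow> nat \<times> nat \<Rightarrow> (nat \<Rightarrow> nat) set" where
  "Xminus n m \<alpha> = {lam \<in> partsX n m. \<alpha> \<in> diagram n lam \<and>
       (\<exists>mu \<in> partsX n m. diagram n mu = diagram n lam - {\<alpha>})}"

definition tplus :: "nat \<Rightarrow> nat \<Rightarrow> nat \<times> nat \<Rightarrow> (nat \<Rightarrow> nat) \<Rightarrow> (nat \<Rightarrow> nat)" where
  "tplus n m \<alpha> lam = (THE mu. mu \<in> partsX n m \<and> diagram n mu = diagram n lam \<union> {\<alpha>})"

definition tminus :: "nat \<Rightarrow> nat \<Rightarrow> nat \<times> nat \<Rightarrow> (nat \<Rightarrow> nat) \<Rightarrow> (nat \<Rightarrow> nat)" where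
  "tminus n m \<alpha> lam = (THE mu. mu \<in> partsX n m \<and> diagram n mu = diagram n lam - {\<alpha>})"

text \<open>Elements of Z^{n|m}: pairs (a, b) of coefficient functions, a indexed by {1..n},
  b by {1..m}, zero outside these ranges; (a|b) = sum a_p eps_p - sum b_q delta_q.\<close>

type_synonym zvec = "(nat \<Rightarrow> int) \<times> (nat \<Rightarrow> int)"

definition xvec :: "nat \<Rightarrow> nat \<Rightarrow> (nat \<Rightarrow> nat) \<Rightarrow> zvec" where
  "xvec n m lam =
     ((\<lambda>p. if 1 \<le> p \<and> p \<le> n then int m * (int n - int p) + int n * int (lam (n + 1 - p)) else 0),
      (\<lambda>q. if 1 \<le> q \<and> q \<le> m then int n * (int q - 1) + int m * int (conj_part n lam q) else 0))"

text \<open>Index shift: nu^k(eps_p) = eps_(nu_idx n k p), indices mod n in {1..n}.\<close>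

definition nu_idx :: "nat \<Rightarrow> int \<Rightarrow> nat \<Rightarrow> nat" where
  "nu_idx n k p = nat ((int p - 1 + k) mod int n) + 1"

text \<open>Linear action of nu^k on Z^{n|m}: nu^k (sum a_p eps_p) = sum a_p eps_(p+k),
  so the new coefficient at r is a_(r-k); delta's are fixed.\<close>

definition nu_vec :: "nat \<Rightarrow> nat \<Rightarrow> int \<Rightarrow> zvec \<Rightarrow> zvec" where
  "nu_vec n m k x =
     ((\<lambda>r. if 1 \<le> r \<and> r \<le> n then fst x (nu_idx n (- k) r) else 0), snd x)"

definition add_vec :: "nat \<Rightarrow> nat \<Rightarrow> zvec \<Rightarrow> zvec \<Rightarrow> zvec" where
  "add_vec n m x y =
     ((\<lambda>p. if 1 \<le> p \<and> p \<le> n then fst x p + fst y p else 0),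
      (\<lambda>q. if 1 \<le> q \<and> q \<le> m then snd x q + snd y q else 0))"

definition mvec :: "nat \<Rightarrow> nat \<Rightarrow> int \<Rightarrow> zvec" where
  "mvec n m k = ((\<lambda>p. if 1 \<le> p \<and> p \<le> n then k * int m else 0),
                 (\<lambda>q. if 1 \<le> q \<and> q \<le> m then k * int m else 0))"

definition xk :: "nat \<Rightarrow> nat \<Rightarrow> (nat \<Rightarrow> nat) \<Rightarrow> int \<Rightarrow> zvec" where
  "xk n m lam k = add_vec n m (nu_vec n m (- k) (xvec n m lam)) (mvec n m k)"

text \<open>Hyperplanes and translations for gamma = eps_p - delta_q, encoded as (p,q).\<close>

definition Piplus :: "nat \<times> nat \<Rightarrow> zvec set" where
  "Piplus \<gamma> = {x. fst x (fst \<gamma>) = snd x (snd \<gamma>)}"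

definition Piminus :: "nat \<Rightarrow> nat \<Rightarrow> nat \<times> nat \<Rightarrow> zvec set" where
  "Piminus n m \<gamma> = {x. fst x (fst \<gamma>) - snd x (snd \<gamma>) = int n - int m}"

definition tauplus :: "nat \<Rightarrow> nat \<Rightarrow> nat \<times> nat \<Rightarrow> zvec \<Rightarrow> zvec" where
  "tauplus n m \<gamma> x = ((fst x)(fst \<gamma> := fst x (fst \<gamma>) + int n),
                       (snd x)(snd \<gamma> := snd x (snd \<gamma>) + int m))"

definition tauminus :: "nat \<Rightarrow> nat \<Rightarrow> nat \<times> nat \<Rightarrow> zvec \<Rightarrow> zvec" where
  "tauminus n m \<gamma> x = ((fst x)(fst \<gamma> := fst x (fst \<gamma>) - int n),
                        (snd x)(snd \<gamma> := snd x (snd \<gamma>) - int m))"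

end

theory Submission imports Defs begin

lemma nu_range: "0 < n \<Longrightarrow> 1 \<le> nu_idx n k p \<and> nu_idx n k p \<le> n"
  unfolding nu_idx_def
  by (smt (verit, best) Euclidean_Rings.pos_mod_bound Euclidean_Rings.pos_mod_sign le_add2 nat_less_iff of_nat_0_less_iff Suc_eq_plus1 less_eq_Suc_le)

lemma modaux: "0 \<le> (x::int) \<Longrightarrow> x < n \<Longrightarrow> 0 \<le> y \<Longrightarrow> y < n \<Longrightarrow> ((x + k) mod n = y) = (x = (y - k) mod n)"
proof
  assume h: "0 \<le> x" "x < n" "0 \<le> y" "y < n" "(x + k) mod n = y"
  then have "(y - k) mod n = ((x+k) - k) mod n" by (metis mod_diff_left_eq)
  then show "x = (y - k) mod n" using h by simp
next
  assume h: "0 \<le> x" "x < n" "0 \<le> y" "y < n" "x = (y - k) mod n"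
  then have "(x + k) mod n = ((y - k) + k) mod n" by (metis mod_add_left_eq)
  then show "(x + k) mod n = y" using h by simp
qed

lemma nu_inv: "0 < n \<Longrightarrow> 1 \<le> p \<Longrightarrow> p \<le> n \<Longrightarrow> 1 \<le> i \<Longrightarrow> i \<le> n \<Longrightarrow>
   (nu_idx n k p = i) = (p = nu_idx n (- k) i)"
proof -
  assume a: "0 < n" "1 \<le> p" "p \<le> n" "1 \<le> i" "i \<le> n"
  have "(nu_idx n k p = i) = ((int p - 1 + k) mod int n = int i - 1)"
    unfolding nu_idx_def using a
    by (smt (verit, ccfv_SIG) Euclidean_Rings.pos_mod_sign int_nat_eq nat_int of_nat_0_less_iff of_nat_1 of_nat_add of_nat_diff)
  also have "\<dots> = (int p - 1 = (int i - 1 - k) mod int n)"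
    using a by (intro modaux) auto
  also have "\<dots> = (p = nu_idx n (- k) i)"
    unfolding nu_idx_def using a
    by (smt (verit, ccfv_SIG) Euclidean_Rings.pos_mod_sign int_nat_eq nat_int of_nat_0_less_iff of_nat_1 of_nat_add of_nat_diff)
  finally show ?thesis .
qed


lemma rowset: "lam \<in> partsX n m \<Longrightarrow> {q. (p,q) \<in> diagram n lam} = (if 1 \<le> p \<and> p \<le> n then {1..lam (n+1-p)} else {})"
  unfolding diagram_def by auto

lemma core:
  assumes lam: "lam \<in> partsX n m" and mu: "mu \<in> partsX n m"
    and notin: "(i,j) \<notin> diagram n lam" and D: "diagram n mu = diagram n lam \<union> {(i,j)}"
    and i: "1 \<le> i" "i \<le> n" and j: "1 \<le> j"
  shows "mu = lam(n+1-i := j) \<and> j = Suc (lam (n+1-i)) \<and> conj_part n lam j = n - i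
         \<and> conj_part n mu j = n+1-i \<and> (\<forall>q. q \<noteq> j \<longrightarrow> conj_part n mu q = conj_part n lam q)"
proof -
  define r where "r = n+1-i"
  have r: "1 \<le> r" "r \<le> n" "n+1-r = i" using i by (auto simp: r_def)
  have rows: "{q. (p,q) \<in> diagram n mu} = {q. (p,q) \<in> diagram n lam} \<union> (if p = i then {j} else {})" for p
    using D by auto
  have ri: "{1..mu r} = {1..lam r} \<union> {j}" using rows[of i] rowset[OF lam, of i] rowset[OF mu, of i] i r
    by (simp add: r_def)
  have jn: "j \<notin> {1..lam r}" using notin rowset[OF lam, of i] i by (auto simp: r_def)
  have "card {1..mu r} = Suc (card {1..lam r})" using ri jn by simp
  hence mur: "mu r = Suc (lam r)" by simp
  have jr: "j = Suc (lam r)" using ri jn mur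
    by (metis Un_insert_right atLeastAtMost_iff insertI1 le_SucE not_less_eq_eq sup_bot.right_neutral j)
  have oth: "mu s = lam s" if "s \<noteq> r" for s
  proof (cases "1 \<le> s \<and> s \<le> n")
    case True
    define p where "p = n+1-s"
    have "p \<noteq> i" "1 \<le> p" "p \<le> n" "n+1-p = s" using True that r by (auto simp: p_def r_def)
    hence "{1..mu s} = {1..lam s}" using rows[of p] rowset[OF lam, of p] rowset[OF mu, of p] by simp
    then show ?thesis by (metis card_atLeastAtMost diff_Suc_1)
  next
    case False
    then have "s < 1 \<or> s > n" by auto
    then show ?thesis using lam mu unfolding partsX_def by (metis (mono_tags, lifting) mem_Collect_eq)
  qed
  have mueq: "mu = lam(r := j)" using oth mur jr by (auto simp: fun_eq_iff)
  have lmono: "p \<le> q \<Longrightarrow> 1 \<le> p \<Longrightarrow> q \<le> n \<Longrightarrow> lam q \<le> lam p" for p q using lam unfolding partsX_def by blast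
  have mmono: "p \<le> q \<Longrightarrow> 1 \<le> p \<Longrightarrow> q \<le> n \<Longrightarrow> mu q \<le> mu p" for p q using mu unfolding partsX_def by blast
  have s1: "{p \<in> {1..n}. j \<le> lam p} = {1..r-1}"
  proof (rule set_eqI, rule iffI)
    fix p assume "p \<in> {p \<in> {1..n}. j \<le> lam p}"
    hence "1 \<le> p" "p \<le> n" "j \<le> lam p" by auto
    moreover have "p < r" proof (rule ccontr)
      assume "\<not> p < r" hence "lam p \<le> lam r" using lmono[of r p] r \<open>p \<le> n\<close> by simp
      thus False using jr \<open>j \<le> lam p\<close> by simp
    qed
    ultimately show "p \<in> {1..r-1}" by simp
  next
    fix p assume "p \<in> {1..r-1}"
    hence "1 \<le> p" "p < r" by auto
    hence "mu r \<le> mu p" "mu p = lam p" using mmono[of p r] r oth[of p] by auto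
    thus "p \<in> {p \<in> {1..n}. j \<le> lam p}" using mur jr \<open>1 \<le> p\<close> \<open>p < r\<close> r by auto
  qed
  have s2: "{p \<in> {1..n}. j \<le> mu p} = {1..r}"
  proof (rule set_eqI, rule iffI)
    fix p assume "p \<in> {p \<in> {1..n}. j \<le> mu p}"
    hence "1 \<le> p" "p \<le> n" "j \<le> mu p" by auto
    moreover have "p \<le> r" proof (rule ccontr)
      assume "\<not> p \<le> r" hence "lam p \<le> lam r" "mu p = lam p" using lmono[of r p] r \<open>p \<le> n\<close> oth[of p] by auto
      thus False using jr \<open>j \<le> mu p\<close> by simp
    qed
    ultimately show "p \<in> {1..r}" by simp
  next
    fix p assume "p \<in> {1..r}"
    hence "1 \<le> p" "p \<le> r" by auto
    hence "mu r \<le> mu p" using mmono[of p r] r by auto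
    thus "p \<in> {p \<in> {1..n}. j \<le> mu p}" using mur jr \<open>1 \<le> p\<close> \<open>p \<le> r\<close> r by auto
  qed
  have s3: "{p \<in> {1..n}. q \<le> mu p} = {p \<in> {1..n}. q \<le> lam p}" if "q \<noteq> j" for q
    using that mueq jr by auto
  show ?thesis
    unfolding conj_part_def using s1 s2 s3 mueq jr r by (simp add: r_def)
qed


lemma xk_fst: "fst (xk n m lam k) p = (if 1 \<le> p \<and> p \<le> n then fst (xvec n m lam) (nu_idx n k p) + k * int m else 0)"
  unfolding xk_def add_vec_def nu_vec_def mvec_def by simp

lemma xk_snd: "snd (xk n m lam k) q = (if 1 \<le> q \<and> q \<le> m then snd (xvec n m lam) q + k * int m else 0)"
  unfolding xk_def add_vec_def nu_vec_def mvec_def by simp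

lemma step:
  assumes n: "0 < n" and i: "1 \<le> i" "i \<le> n" and j: "1 \<le> j" "j \<le> m"
    and mueq: "mu = lam(n+1-i := j)" and jr: "j = Suc (lam (n+1-i))"
    and c1: "conj_part n mu j = Suc (conj_part n lam j)"
    and c2: "\<forall>q. q \<noteq> j \<longrightarrow> conj_part n mu q = conj_part n lam q"
  shows "xk n m mu k = tauplus n m (nu_idx n (- k) i, j) (xk n m lam k)"
proof -
  define b where "b = nu_idx n (- k) i"
  have b: "1 \<le> b" "b \<le> n" using nu_range[OF n] by (auto simp: b_def)
  have f: "fst (xk n m mu k) p = ((fst (xk n m lam k))(b := fst (xk n m lam k) b + int n)) p" for p
  proof (cases "1 \<le> p \<and> p \<le> n")
    case True
    define s where "s = nu_idx n k p"
    have s: "1 \<le> s" "s \<le> n" using nu_range[OF n] by (auto simp: s_def)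
    have sb: "(s = i) = (p = b)" using nu_inv[OF n, of p i k] True i by (simp add: s_def b_def)
    show ?thesis
    proof (cases "p = b")
      case True
      hence si: "nu_idx n k p = i" using sb by (simp add: s_def)
      show ?thesis using \<open>1 \<le> p \<and> p \<le> n\<close> i unfolding True[symmetric] xk_fst xvec_def si
        by (simp add: mueq jr algebra_simps)
    next
      case False
      hence "s \<noteq> i" using sb by simp
      hence "n+1-s \<noteq> n+1-i" using s i by simp
      then show ?thesis using False \<open>1 \<le> p \<and> p \<le> n\<close> s unfolding xk_fst xvec_def
        by (simp add: mueq s_def)
    qed
  next
    case False
    then show ?thesis using b unfolding xk_fst by auto
  qed
  have g: "snd (xk n m mu k) q = ((snd (xk n m lam k))(j := snd (xk n m lam k) j + int m)) q" for q
    using j c1 c2 unfolding xk_snd xvec_def by (auto simp: algebra_simps)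
  show ?thesis unfolding tauplus_def b_def[symmetric]
    using f g by (simp add: prod_eq_iff fun_eq_iff)
qed


lemma xk_at:
  assumes n: "0 < n" and i: "1 \<le> i" "i \<le> n" and j: "1 \<le> j" "j \<le> m"
  shows "fst (xk n m lam k) (nu_idx n (- k) i) = int m * (int n - int i) + int n * int (lam (n+1-i)) + k * int m"
    and "snd (xk n m lam k) j = int n * (int j - 1) + int m * int (conj_part n lam j) + k * int m"
proof -
  have b: "1 \<le> nu_idx n (- k) i" "nu_idx n (- k) i \<le> n" using nu_range[OF n] by auto
  have "nu_idx n k (nu_idx n (- k) i) = i" using nu_inv[OF n b i] by simp
  then show "fst (xk n m lam k) (nu_idx n (- k) i) = int m * (int n - int i) + int n * int (lam (n+1-i)) + k * int m"
    using b i unfolding xk_fst xvec_def by simp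
  show "snd (xk n m lam k) j = int n * (int j - 1) + int m * int (conj_part n lam j) + k * int m"
    using j unfolding xk_snd xvec_def by simp
qed

theorem lemma4p13:
  fixes n m i j :: nat and k :: int and lam :: "nat \<Rightarrow> nat"
  assumes "0 < n" and "n < m" and "coprime m n"
    and "1 \<le> i" and "i \<le> n" and "1 \<le> j" and "j \<le> m"
  defines "\<beta> \<equiv> (nu_idx n (- k) i, j)"
  shows "(lam \<in> Xplus n m (i, j) \<longrightarrow>
            xk n m lam k \<in> Piplus \<beta> \<and>
            xk n m (tplus n m (i, j) lam) k = tauplus n m \<beta> (xk n m lam k))
       \<and> (lam \<in> Xminus n m (i, j) \<longrightarrow>
            xk n m lam k \<in> Piminus n m \<beta> \<and>
            xk n m (tminus n m (i, j) lam) k = tauminus n m \<beta> (xk n m lam k))"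
proof (intro conjI impI)
  assume X: "lam \<in> Xplus n m (i, j)"
  then obtain mu where lam: "lam \<in> partsX n m" and mu: "mu \<in> partsX n m"
    and ni: "(i,j) \<notin> diagram n lam" and D: "diagram n mu = diagram n lam \<union> {(i,j)}"
    unfolding Xplus_def by blast
  note C = core[OF lam mu ni D assms(4,5,6)]
  have "tplus n m (i, j) lam = mu" unfolding tplus_def
  proof (rule the_equality)
    show "mu \<in> partsX n m \<and> diagram n mu = diagram n lam \<union> {(i, j)}" using mu D by blast
  next
    fix mu' assume "mu' \<in> partsX n m \<and> diagram n mu' = diagram n lam \<union> {(i, j)}"
    then show "mu' = mu" using core[OF lam _ ni _ assms(4,5,6), of mu'] C by auto
  qed
  moreover have "xk n m mu k = tauplus n m \<beta> (xk n m lam k)"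
    unfolding \<beta>_def using C assms by (intro step) (auto simp: Suc_diff_le)
  ultimately show "xk n m (tplus n m (i, j) lam) k = tauplus n m \<beta> (xk n m lam k)" by simp
  have e: "int (lam (n+1-i)) = int j - 1" "int (conj_part n lam j) = int n - int i" using C assms by auto
  show "xk n m lam k \<in> Piplus \<beta>"
    unfolding Piplus_def \<beta>_def by (simp only: mem_Collect_eq fst_conv snd_conv xk_at[OF assms(1,4,5,6,7), of lam k] e; simp add: algebra_simps)
next
  assume X: "lam \<in> Xminus n m (i, j)"
  then obtain mu where lam: "lam \<in> partsX n m" and mu: "mu \<in> partsX n m"
    and ii: "(i,j) \<in> diagram n lam" and D0: "diagram n mu = diagram n lam - {(i,j)}"
    unfolding Xminus_def by blast
  have ni: "(i,j) \<notin> diagram n mu" and D: "diagram n lam = diagram n mu \<union> {(i,j)}" using D0 ii by auto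
  note C = core[OF mu lam ni D assms(4,5,6)]
  have "tminus n m (i, j) lam = mu" unfolding tminus_def
  proof (rule the_equality)
    show "mu \<in> partsX n m \<and> diagram n mu = diagram n lam - {(i, j)}" using mu D0 by blast
  next
    fix mu' assume h: "mu' \<in> partsX n m \<and> diagram n mu' = diagram n lam - {(i, j)}"
    have ni': "(i,j) \<notin> diagram n mu'" and D': "diagram n lam = diagram n mu' \<union> {(i,j)}" using h ii by auto
    have C': "lam = mu'(n+1-i := j) \<and> j = Suc (mu' (n+1-i))"
      using core[OF _ lam ni' D' assms(4,5,6)] h by blast
    show "mu' = mu"
    proof
      fix s show "mu' s = mu s"
        using C C' by (cases "s = n+1-i") (auto simp: fun_eq_iff, metis fun_upd_other)
    qed
  qed
  moreover have "xk n m lam k = tauplus n m \<beta> (xk n m mu k)"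
    unfolding \<beta>_def using C assms by (intro step) (auto simp: Suc_diff_le)
  ultimately show "xk n m (tminus n m (i, j) lam) k = tauminus n m \<beta> (xk n m lam k)"
    by (simp add: tauplus_def tauminus_def)
  have e: "int (lam (n+1-i)) = int j" "int (conj_part n lam j) = int n + 1 - int i" using C assms by auto
  show "xk n m lam k \<in> Piminus n m \<beta>"
    unfolding Piminus_def \<beta>_def by (simp only: mem_Collect_eq fst_conv snd_conv xk_at[OF assms(1,4,5,6,7), of lam k] e; simp add: algebra_simps)
qed

end
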